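(* For every $0<\epsilon<1$ there is an infinite family of graphs $G_n$ on $n$ vertices ($n\to\infty$) with edge density at most $1+\Theta(n^{-\epsilon})$ such that Broadcast on $G_n$ is not solvable with fewer than $\Theta(n^{1-\epsilon})$ ignorant agents.
   Context: Edge density of a graph with $m$ edges and $n$ nodes is $m/n$. Broadcast model: a connected base graph $G=(V,E)$ with $n$ nodes. There is one source agent holding a message $\mathcal M$ and $k\ge1$ ignorant agents (agents not holding $\mathcal M$); initially all agents occupy pairwise distinct nodes, the initial placement being chosen by the adversary. Time proceeds in synchronous rounds; in each round: (1) the adversary removes a (possibly empty) set $E'\subseteq E$ of edges such that $(V,E\setminus E')$ is connected; (2) each agent (agents have unique IDs, local memory, and see the entire current graph, the positions of all agents and which agents hold $\mathcal M$) chooses either to stay or to traverse an edge of $E\setminus E'$ incident to its current node; (3) agents move. Whenever an ignorant agent is at the same node as an agent holding $\mathcal M$, it receives $\mathcal M$ and becomes a source agent. The adversary is adaptive and knows the agents' strategy. Broadcast is solvable on $G$ with $k$ ignorant agents if the agents have a strategy such that, for every initial placement and every adversary behaviour, after finitely many rounds all agents hold $\mathcal M$; otherwise the adversary is said to have a winning strategy. *)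

theory Defs
  imports Complex_Main
begin

definition graph_on :: "nat set \<Rightarrow> nat set set \<Rightarrow> bool" where
  "graph_on V E \<longleftrightarrow> E \<subseteq> {{u, v} | u v. u \<in> V \<and> v \<in> V \<and> u \<noteq> v}"

definition connected_graph :: "nat set \<Rightarrow> nat set set \<Rightarrow> bool" where
  "connected_graph V E \<longleftrightarrow>
     (\<forall>u\<in>V. \<forall>v\<in>V. (u, v) \<in> {(x, y). {x, y} \<in> E}\<^sup>*)"

(* Agents are 0..k; agent 0 is the source, agents 1..k are initially ignorant.
   A configuration: positions of agents and the set of agents holding the message. *)
type_synonym config = "(nat \<Rightarrow> nat) \<times> nat set"
(* history: past configurations together with the edge set removed in that round *)
type_synonym hist = "(config \<times> nat set set) list"

definition inform :: "nat \<Rightarrow> nat set \<Rightarrow> (nat \<Rightarrow> nat) \<Rightarrow> nat set" where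
  "inform k I p = I \<union> {i \<in> {0..k}. \<exists>j\<in>I. p i = p j}"

(* sigma: (joint, deterministic, full-information) agent strategy: given history,
   current configuration and the currently removed edges, the new positions.
   alpha: adaptive adversary: given history and current configuration, edges removed. *)
primrec run :: "(hist \<Rightarrow> config \<Rightarrow> nat set set \<Rightarrow> (nat \<Rightarrow> nat)) \<Rightarrow>
    (hist \<Rightarrow> config \<Rightarrow> nat set set) \<Rightarrow> nat \<Rightarrow> (nat \<Rightarrow> nat) \<Rightarrow> nat \<Rightarrow> hist \<times> config" where
  "run \<sigma> \<alpha> k p0 0 = ([], (p0, {0}))"
| "run \<sigma> \<alpha> k p0 (Suc t) =
     (let (h, c) = run \<sigma> \<alpha> k p0 t; R = \<alpha> h c; p' = \<sigma> h c R
      in (h @ [(c, R)], (p', inform k (snd c) p')))"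

definition legal_move :: "nat set set \<Rightarrow> nat \<Rightarrow> nat set set \<Rightarrow> (nat \<Rightarrow> nat) \<Rightarrow> (nat \<Rightarrow> nat) \<Rightarrow> bool" where
  "legal_move E k R p p' \<longleftrightarrow> (\<forall>i\<in>{0..k}. p' i = p i \<or> {p i, p' i} \<in> E - R)"

definition broadcast_solvable :: "nat set \<Rightarrow> nat set set \<Rightarrow> nat \<Rightarrow> bool" where
  "broadcast_solvable V E k \<longleftrightarrow>
     (\<exists>\<sigma>. \<forall>p0. inj_on p0 {0..k} \<and> p0 ` {0..k} \<subseteq> V \<longrightarrow>
        (\<forall>\<alpha>. (\<forall>h c. \<alpha> h c \<subseteq> E \<and> connected_graph V (E - \<alpha> h c)) \<longrightarrow>
           (\<forall>t. case run \<sigma> \<alpha> k p0 t of (h, c) \<Rightarrow>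
                  legal_move E k (\<alpha> h c) (fst c) (\<sigma> h c (\<alpha> h c))) \<and>
           (\<exists>t. {0..k} \<subseteq> snd (snd (run \<sigma> \<alpha> k p0 t)))))"

end

theory Submission imports Defs begin

definition Eg :: "nat \<Rightarrow> nat \<Rightarrow> nat set set" where
  "Eg d n = (\<lambda>j. {0,j}) ` {1..d} \<union> (\<lambda>j. {j, d+j}) ` {1..d} \<union> (\<lambda>i. {i, Suc i}) ` {d<..<n-1}"

definition Rc :: "nat \<Rightarrow> nat \<Rightarrow> (nat \<Rightarrow> nat) \<Rightarrow> nat set set" where
  "Rc d k p = (\<lambda>j. {0,j}) ` {j\<in>{1..d}. \<exists>i\<in>{1..k}. p i = j} \<union>
     (\<lambda>j. {j, d+j}) ` {j\<in>{1..d}. (\<forall>i\<in>{1..k}. p i \<noteq> j) \<and> (p 0 = j \<or> (\<exists>i\<in>{1..k}. p i = d+j))}"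

lemma edge_cases:
  assumes "{a,b} \<in> Eg d n" "d \<ge> 1"
  shows "(a = 0 \<and> 1 \<le> b \<and> b \<le> d) \<or> (b = 0 \<and> 1 \<le> a \<and> a \<le> d) \<or>
         (1 \<le> a \<and> a \<le> d \<and> b = d + a) \<or> (1 \<le> b \<and> b \<le> d \<and> a = d + b) \<or> (d < a \<and> d < b)"
  using assms unfolding Eg_def by (auto simp: doubleton_eq_iff)

lemma R0_mem: "1 \<le> j \<Longrightarrow> j \<le> d \<Longrightarrow> i \<in> {1..k} \<Longrightarrow> p i = j \<Longrightarrow> {0,j} \<in> Rc d k p"
  unfolding Rc_def by (intro UnI1 image_eqI[where x=j]) auto

lemma R1_mem: "1 \<le> j \<Longrightarrow> j \<le> d \<Longrightarrow> \<forall>i\<in>{1..k}. p i \<noteq> j \<Longrightarrow> p 0 = j \<or> (\<exists>i\<in>{1..k}. p i = d+j) \<Longrightarrow> {j,d+j} \<in> Rc d k p"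
  unfolding Rc_def by (intro UnI2 image_eqI[where x=j]) auto

lemma R0_elim: "{0,j} \<in> Rc d k p \<Longrightarrow> 1 \<le> j \<Longrightarrow> \<exists>i\<in>{1..k}. p i = j"
  unfolding Rc_def by (auto simp: doubleton_eq_iff)

lemma R1_elim: "{j,d+j} \<in> Rc d k p \<Longrightarrow> 1 \<le> j \<Longrightarrow> j \<le> d \<Longrightarrow>
   (\<forall>i\<in>{1..k}. p i \<noteq> j) \<and> (p 0 = j \<or> (\<exists>i\<in>{1..k}. p i = d+j))"
  unfolding Rc_def by (auto simp: doubleton_eq_iff)

lemma Rpath: "d < i \<Longrightarrow> {i, Suc i} \<notin> Rc d k p"
  unfolding Rc_def by (auto simp: doubleton_eq_iff)

lemma R_sub: "Rc d k p \<subseteq> Eg d n"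
proof -
  have "Rc d k p \<subseteq> (\<lambda>j. {0,j}) ` {1..d} \<union> (\<lambda>j. {j, d+j}) ` {1..d}"
    unfolding Rc_def by (intro Un_mono image_mono) auto
  thus ?thesis unfolding Eg_def by auto
qed


lemma rel_sym: "sym {(x, y::nat). {x, y} \<in> F}"
  by (auto simp: sym_def insert_commute)

lemma rtr_sym: "(a, b) \<in> {(x, y::nat). {x, y} \<in> F}\<^sup>* \<Longrightarrow> (b, a) \<in> {(x, y). {x, y} \<in> F}\<^sup>*"
  using rel_sym[of F] by (meson sym_rtrancl symD)

lemma exists_free:
  fixes p :: "nat \<Rightarrow> nat"
  assumes "k + 2 \<le> d"
  shows "\<exists>j0\<in>{1..d}. \<forall>i\<in>{0..k}. p i \<noteq> j0 \<and> p i \<noteq> d + j0"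
proof -
  define f where "f i = (if p i \<le> d then p i else p i - d)" for i
  have "card (f ` {0..k}) \<le> k + 1" using card_image_le[of "{0..k}" f] by simp
  hence "\<not> {1..d} \<subseteq> f ` {0..k}" using assms card_mono[of "f ` {0..k}" "{1..d}"] by fastforce
  then obtain j0 where j0: "j0 \<in> {1..d}" "j0 \<notin> f ` {0..k}" by blast
  have "\<forall>i\<in>{0..k}. p i \<noteq> j0 \<and> p i \<noteq> d + j0"
  proof
    fix i assume i: "i \<in> {0..k}"
    have "f i \<noteq> j0" using j0 i by blast
    thus "p i \<noteq> j0 \<and> p i \<noteq> d + j0" using j0 unfolding f_def by auto
  qed
  thus ?thesis using j0 by blast
qed

lemma conn:
  assumes "k + 2 \<le> d" "2 * d + 1 \<le> n"
  shows "connected_graph {0..<n} (Eg d n - Rc d k p)"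
proof -
  define F where "F = Eg d n - Rc d k p"
  define rel where "rel = {(x, y::nat). {x, y} \<in> F}"
  have edge: "(a, b) \<in> rel\<^sup>*" if "{a,b} \<in> F" for a b
    using that unfolding rel_def by auto
  have path: "d + 1 + m < n \<longrightarrow> (d + 1 + m, d + 1) \<in> rel\<^sup>*" for m
  proof (induction m)
    case 0 then show ?case by simp
  next
    case (Suc m)
    show ?case
    proof
      assume a: "d + 1 + Suc m < n"
      have "{d + 1 + m, Suc (d + 1 + m)} \<in> Eg d n" unfolding Eg_def using a by auto
      moreover have "{d + 1 + m, Suc (d + 1 + m)} \<notin> Rc d k p" by (rule Rpath) simp
      ultimately have "{d + 1 + Suc m, d + 1 + m} \<in> F" unfolding F_def by (simp add: insert_commute)
      hence "(d + 1 + Suc m, d + 1 + m) \<in> rel\<^sup>*" by (rule edge)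
      moreover have "(d + 1 + m, d + 1) \<in> rel\<^sup>*" using Suc a by simp
      ultimately show "(d + 1 + Suc m, d + 1) \<in> rel\<^sup>*" by (rule rtrancl_trans)
    qed
  qed
  have big: "(u, d + 1) \<in> rel\<^sup>*" if "d < u" "u < n" for u
    using path[of "u - d - 1"] that by simp
  obtain j0 where j0: "j0 \<in> {1..d}" "\<forall>i\<in>{0..k}. p i \<noteq> j0 \<and> p i \<noteq> d + j0"
    using exists_free[OF assms(1)] by blast
  have "{0, j0} \<notin> Rc d k p" using R0_elim[of j0 d k p] j0 by auto
  hence e1: "{0, j0} \<in> F" unfolding F_def Eg_def using j0(1) by auto
  have "{j0, d + j0} \<notin> Rc d k p" using R1_elim[of j0 d k p] j0 by auto
  hence e2: "{j0, d + j0} \<in> F" unfolding F_def Eg_def using j0(1) by auto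
  have zero: "(0, d + 1) \<in> rel\<^sup>*"
  proof -
    have "(0, j0) \<in> rel\<^sup>*" using e1 edge by blast
    moreover have "(j0, d + j0) \<in> rel\<^sup>*" using e2 edge by blast
    moreover have "(d + j0, d + 1) \<in> rel\<^sup>*" using big[of "d + j0"] j0(1) assms by auto
    ultimately show ?thesis by (meson rtrancl_trans)
  qed
  have mid: "(j, d + 1) \<in> rel\<^sup>*" if j: "1 \<le> j" "j \<le> d" for j
  proof (cases "{j, d + j} \<in> Rc d k p")
    case False
    hence "{j, d + j} \<in> F" unfolding F_def Eg_def using j by auto
    hence "(j, d + j) \<in> rel\<^sup>*" by (rule edge)
    moreover have "(d + j, d + 1) \<in> rel\<^sup>*" using big[of "d + j"] j assms by auto
    ultimately show ?thesis by (rule rtrancl_trans)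
  next
    case True
    hence "\<forall>i\<in>{1..k}. p i \<noteq> j" using R1_elim j by blast
    hence "{0, j} \<notin> Rc d k p" using R0_elim[of j d k p] j by auto
    hence "{j, 0} \<in> F" unfolding F_def Eg_def using j by (auto simp: insert_commute)
    hence "(j, 0) \<in> rel\<^sup>*" by (rule edge)
    thus ?thesis using zero by (rule rtrancl_trans)
  qed
  have all: "(u, d + 1) \<in> rel\<^sup>*" if "u \<in> {0..<n}" for u
  proof -
    consider "u = 0" | "1 \<le> u \<and> u \<le> d" | "d < u" by linarith
    thus ?thesis using zero mid big that by (cases; auto)
  qed
  show ?thesis unfolding connected_graph_def
  proof (intro ballI)
    fix u v assume "u \<in> {0..<n}" "v \<in> {0..<n}"
    hence "(u, d + 1) \<in> rel\<^sup>*" "(v, d + 1) \<in> rel\<^sup>*" using all by auto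
    hence "(u, v) \<in> rel\<^sup>*" using rtr_sym[of v "d+1" F] rtrancl_trans[of u "d+1" rel v] unfolding rel_def by blast
    thus "(u, v) \<in> {(x, y). {x, y} \<in> Eg d n - Rc d k p}\<^sup>*" unfolding rel_def F_def .
  qed
qed


definition Inv :: "nat \<Rightarrow> nat \<Rightarrow> (nat \<Rightarrow> nat) \<Rightarrow> bool" where
  "Inv d k p \<longleftrightarrow> p 0 \<le> d \<and> (\<forall>i\<in>{1..k}. p i \<noteq> 0 \<and> p i \<noteq> p 0)"

lemma step:
  assumes inv: "Inv d k p" and lm: "legal_move (Eg d n) k (Rc d k p) p p'" and d1: "1 \<le> d"
  shows "Inv d k p'"
proof -
  have mv: "p' i = p i \<or> {p i, p' i} \<in> Eg d n - Rc d k p" if "i \<in> {0..k}" for i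
    using lm that unfolding legal_move_def by blast
  have inv0: "p 0 \<le> d" and invi: "\<And>i. i \<in> {1..k} \<Longrightarrow> p i \<noteq> 0 \<and> p i \<noteq> p 0"
    using inv unfolding Inv_def by auto
  have S: "p' 0 = p 0 \<or> (p 0 = 0 \<and> 1 \<le> p' 0 \<and> p' 0 \<le> d \<and> {0, p' 0} \<notin> Rc d k p) \<or> p' 0 = 0"
  proof (cases "p' 0 = p 0")
    case False
    hence e: "{p 0, p' 0} \<in> Eg d n" "{p 0, p' 0} \<notin> Rc d k p" using mv[of 0] by auto
    show ?thesis
    proof (cases "p 0 = 0")
      case True thus ?thesis using edge_cases[OF e(1) d1] e(2) by auto
    next
      case False
      hence j: "1 \<le> p 0" "p 0 \<le> d" using inv0 by auto
      have "{p 0, d + p 0} \<in> Rc d k p"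
        by (rule R1_mem) (use j invi in auto)
      thus ?thesis using edge_cases[OF e(1) d1] e(2) j by auto
    qed
  qed simp
  have S0: "p' 0 \<le> d" using S inv0 by auto
  have C0: "p' i \<noteq> 0" if i: "i \<in> {1..k}" for i
  proof
    assume z: "p' i = 0"
    have "p i \<noteq> 0" using invi i by blast
    hence e: "{p i, 0} \<in> Eg d n" "{p i, 0} \<notin> Rc d k p" using mv[of i] z i by auto
    hence j: "1 \<le> p i" "p i \<le> d" using edge_cases[OF e(1) d1] by auto
    have "{0, p i} \<in> Rc d k p" by (rule R0_mem[OF j i]) simp
    thus False using e(2) by (simp add: insert_commute)
  qed
  have C1: "p' i \<noteq> p' 0" if i: "i \<in> {1..k}" for i
  proof
    assume eq: "p' i = p' 0"
    define b where "b = p' 0"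
    have b: "1 \<le> b" "b \<le> d" using C0[OF i] eq S0 unfolding b_def by auto
    have nochaser: "\<forall>i\<in>{1..k}. p i \<noteq> b"
    proof (cases "p' 0 = p 0")
      case True thus ?thesis using invi unfolding b_def by auto
    next
      case False
      hence "{0, b} \<notin> Rc d k p" using S b unfolding b_def by auto
      thus ?thesis using R0_mem[OF b] by blast
    qed
    have cut: "{b, d + b} \<in> Rc d k p"
    proof (cases "p' 0 = p 0")
      case True thus ?thesis using R1_mem[OF b nochaser] unfolding b_def by auto
    next
      case False
      hence p00: "p 0 = 0" using S b unfolding b_def by auto
      have "p i \<noteq> b" using nochaser i by blast
      hence e: "{p i, b} \<in> Eg d n" "{p i, b} \<notin> Rc d k p" using mv[of i] i eq unfolding b_def by auto
      have "p i = d + b" using edge_cases[OF e(1) d1] b invi[OF i] by auto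
      thus ?thesis using R1_mem[OF b nochaser] i by blast
    qed
    have "p i \<noteq> b" using nochaser i by blast
    hence e: "{p i, b} \<in> Eg d n" "{p i, b} \<notin> Rc d k p" using mv[of i] i eq unfolding b_def by auto
    have "p i = d + b" using edge_cases[OF e(1) d1] b invi[OF i] by auto
    thus False using e(2) cut by (simp add: insert_commute)
  qed
  show ?thesis unfolding Inv_def using S0 C0 C1 by blast
qed

lemma inform_same:
  assumes "Inv d k p" shows "inform k {0} p = {0}"
proof -
  have "{i \<in> {0..k}. \<exists>j\<in>{0}. p i = p j} \<subseteq> {0}"
  proof
    fix i assume i: "i \<in> {i \<in> {0..k}. \<exists>j\<in>{0}. p i = p j}"
    hence "i \<in> {0..k}" "p i = p 0" by auto
    thus "i \<in> {0}" using assms unfolding Inv_def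
      by (metis atLeastAtMost_iff bot_nat_0.not_eq_extremum less_one linorder_not_less singletonI)
  qed
  thus ?thesis unfolding inform_def by blast
qed

lemma game:
  assumes "2 * d + 1 \<le> n" "1 \<le> k" "k + 2 \<le> d"
  shows "\<not> broadcast_solvable {0..<n} (Eg d n) k"
proof
  assume A: "broadcast_solvable {0..<n} (Eg d n) k"
  from A[unfolded broadcast_solvable_def] obtain \<sigma> where sig: "\<forall>p0. inj_on p0 {0..k} \<and> p0 ` {0..k} \<subseteq> {0..<n} \<longrightarrow>
        (\<forall>\<alpha>. (\<forall>h c. \<alpha> h c \<subseteq> Eg d n \<and> connected_graph {0..<n} (Eg d n - \<alpha> h c)) \<longrightarrow>
           (\<forall>t. case run \<sigma> \<alpha> k p0 t of (h, c) \<Rightarrow>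
                  legal_move (Eg d n) k (\<alpha> h c) (fst c) (\<sigma> h c (\<alpha> h c))) \<and>
           (\<exists>t. {0..k} \<subseteq> snd (snd (run \<sigma> \<alpha> k p0 t))))"
    ..
  define p0 where "p0 = (\<lambda>i::nat. if i = 0 then 0 else d + i)"
  define \<alpha> where "\<alpha> = (\<lambda>(h::hist) (c::config). Rc d k (fst c))"
  have inj: "inj_on p0 {0..k}" unfolding p0_def inj_on_def by auto
  have img: "p0 ` {0..k} \<subseteq> {0..<n}" unfolding p0_def using assms by auto
  have adm: "\<forall>h c. \<alpha> h c \<subseteq> Eg d n \<and> connected_graph {0..<n} (Eg d n - \<alpha> h c)"
    unfolding \<alpha>_def using R_sub conn[OF assms(3,1)] by auto
  note LT = mp[OF spec[OF mp[OF spec[OF sig, of p0] conjI[OF inj img]], of \<alpha>] adm]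
  note L = conjunct1[OF LT] and T = conjunct2[OF LT]
  have d1: "1 \<le> d" using assms by simp
  have I: "Inv d k (fst (snd (run \<sigma> \<alpha> k p0 t))) \<and> snd (snd (run \<sigma> \<alpha> k p0 t)) = {0}" for t
  proof (induction t)
    case 0 show ?case using assms unfolding p0_def Inv_def by auto
  next
    case (Suc t)
    obtain h c where hc: "run \<sigma> \<alpha> k p0 t = (h, c)" by (cases "run \<sigma> \<alpha> k p0 t") simp
    have l0: "legal_move (Eg d n) k (\<alpha> h c) (fst c) (\<sigma> h c (\<alpha> h c))"
      using L[rule_format, of t] hc by simp
    define p' where "p' = \<sigma> h c (\<alpha> h c)"
    have aeq: "\<alpha> h c = Rc d k (fst c)" unfolding \<alpha>_def by simp
    have l1': "legal_move (Eg d n) k (\<alpha> h c) (fst c) p'"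
      unfolding p'_def by (rule l0)
    have l1: "legal_move (Eg d n) k (Rc d k (fst c)) (fst c) p'"
      using l1' aeq by simp
    have ih: "Inv d k (fst c)" "snd c = {0}" using Suc hc by auto
    have inv': "Inv d k (\<sigma> h c (\<alpha> h c))" using step[OF ih(1) l1 d1] unfolding p'_def .
    have "run \<sigma> \<alpha> k p0 (Suc t) = (h @ [(c, \<alpha> h c)], (\<sigma> h c (\<alpha> h c), inform k (snd c) (\<sigma> h c (\<alpha> h c))))"
      using hc by (simp add: Let_def)
    thus ?case using inv' ih(2) inform_same[OF inv'] by simp
  qed
  from T obtain t where "{0..k} \<subseteq> snd (snd (run \<sigma> \<alpha> k p0 t))" by blast
  hence "{0..k} \<subseteq> {0}" using I by simp
  thus False using assms(2) by auto
qed

lemma conn0: assumes "2 * d + 1 \<le> n" "2 \<le> d" shows "connected_graph {0..<n} (Eg d n)"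
proof -
  have c: "connected_graph {0..<n} (Eg d n - Rc d 0 (\<lambda>_. 0))" using conn[of 0 d n] assms by simp
  have "{(x, y). {x, y} \<in> Eg d n - Rc d 0 (\<lambda>_. 0)}\<^sup>* \<subseteq> {(x, y). {x, y} \<in> Eg d n}\<^sup>*"
    by (rule rtrancl_mono) auto
  thus ?thesis using c unfolding connected_graph_def by blast
qed

lemma graph_Eg: assumes "2 * d + 1 \<le> n" shows "graph_on {0..<n} (Eg d n)"
  unfolding graph_on_def Eg_def
proof (intro Un_least subsetI)
  fix e assume "e \<in> (\<lambda>j. {0,j}) ` {1..d}"
  then obtain j where "e = {0,j}" "1 \<le> j" "j \<le> d" by auto
  thus "e \<in> {{u, v} |u v. u \<in> {0..<n} \<and> v \<in> {0..<n} \<and> u \<noteq> v}" using assms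
    by (intro CollectI exI[of _ 0] exI[of _ j]) auto
next
  fix e assume "e \<in> (\<lambda>j. {j, d+j}) ` {1..d}"
  then obtain j where "e = {j, d+j}" "1 \<le> j" "j \<le> d" by auto
  thus "e \<in> {{u, v} |u v. u \<in> {0..<n} \<and> v \<in> {0..<n} \<and> u \<noteq> v}" using assms
    by (intro CollectI exI[of _ j] exI[of _ "d+j"]) auto
next
  fix e assume "e \<in> (\<lambda>i. {i, Suc i}) ` {d<..<n-1}"
  then obtain j where "e = {j, Suc j}" "d < j" "j < n - 1" by auto
  thus "e \<in> {{u, v} |u v. u \<in> {0..<n} \<and> v \<in> {0..<n} \<and> u \<noteq> v}" using assms
    by (intro CollectI exI[of _ j] exI[of _ "Suc j"]) auto
qed

lemma card_Eg: "card (Eg d n) \<le> d + d + (n - 2 - d)"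
proof -
  have "card (Eg d n) \<le> card ((\<lambda>j. {0,j}) ` {1..d} \<union> (\<lambda>j. {j, d+j}) ` {1..d}) + card ((\<lambda>i. {i, Suc i}) ` {d<..<n-1})"
    unfolding Eg_def by (rule card_Un_le)
  also have "\<dots> \<le> card ((\<lambda>j. {0,j}) ` {1..d}) + card ((\<lambda>j. {j, d+j}) ` {1..d}) + card ((\<lambda>i. {i, Suc i}) ` {d<..<n-1})"
    using card_Un_le by (meson add_le_mono1)
  also have "\<dots> \<le> d + d + (n - 2 - d)"
    using card_image_le[of "{1..d}" "\<lambda>j. {0,j}"] card_image_le[of "{1..d}" "\<lambda>j. {j, d+j}"]
      card_image_le[of "{d<..<n-1}" "\<lambda>i. {i, Suc i}"] by simp
  finally show ?thesis .
qed

theorem corollary1: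
  fixes \<epsilon> :: real
  assumes "0 < \<epsilon>" and "\<epsilon> < 1"
  shows "\<exists>c1 c2 :: real. c1 > 0 \<and> c2 > 0 \<and>
    (\<forall>N::nat. \<exists>n\<ge>N. \<exists>E.
        graph_on {0..<n} E \<and> connected_graph {0..<n} E \<and>
        real (card E) / real n \<le> 1 + c1 * real n powr (- \<epsilon>) \<and>
        (\<forall>k::nat. 1 \<le> k \<and> real k < c2 * real n powr (1 - \<epsilon>) \<longrightarrow>
            \<not> broadcast_solvable {0..<n} E k))"
proof (rule exI[of _ 1], rule exI[of _ "1/4"], intro conjI allI, simp, simp)
  fix N :: nat
  define n where "n = N + 10"
  define x where "x = real n powr (1 - \<epsilon>)"
  define D where "D = nat \<lfloor>x / 4\<rfloor>"
  define d where "d = D + 2"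
  have npos: "real n \<ge> 10" unfolding n_def by simp
  have x0: "x \<ge> 0" unfolding x_def by simp
  have xn: "x \<le> real n" unfolding x_def
    using powr_mono[of "1 - \<epsilon>" 1 "real n"] npos assms by simp
  have xe: "x = real n * real n powr (- \<epsilon>)" unfolding x_def
    using powr_add[of "real n" 1 "- \<epsilon>"] npos by simp
  have D4: "real D \<le> x / 4" unfolding D_def using x0 of_int_floor_le[of "x/4"] by simp
  have dn: "2 * d + 1 \<le> n"
  proof -
    have "real (2 * d + 1) \<le> real n" unfolding d_def using D4 xn npos by simp
    thus ?thesis by linarith
  qed
  show "\<exists>n\<ge>N. \<exists>E. graph_on {0..<n} E \<and> connected_graph {0..<n} E \<and>
        real (card E) / real n \<le> 1 + 1 * real n powr (- \<epsilon>) \<and>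
        (\<forall>k::nat. 1 \<le> k \<and> real k < 1/4 * real n powr (1 - \<epsilon>) \<longrightarrow>
            \<not> broadcast_solvable {0..<n} E k)"
  proof (intro exI[of _ n] conjI exI[of _ "Eg d n"] allI impI)
    show "N \<le> n" unfolding n_def by simp
    show "graph_on {0..<n} (Eg d n)" by (rule graph_Eg[OF dn])
    show "connected_graph {0..<n} (Eg d n)" using conn0 dn unfolding d_def by simp
    have c: "card (Eg d n) \<le> n + D" using card_Eg[of d n] dn unfolding d_def by simp
    have "real (card (Eg d n)) / real n \<le> (real n + real D) / real n"
      using c npos by (intro divide_right_mono) auto
    also have "\<dots> = 1 + real D / real n" using npos by (simp add: field_simps)
    also have "\<dots> \<le> 1 + (x / 4) / real n" using D4 npos by (intro add_left_mono divide_right_mono) auto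
    also have "\<dots> \<le> 1 + 1 * real n powr (- \<epsilon>)" using xe npos by (simp add: field_simps)
    finally show "real (card (Eg d n)) / real n \<le> 1 + 1 * real n powr (- \<epsilon>)" .
  next
    fix k :: nat
    assume k: "1 \<le> k \<and> real k < 1/4 * real n powr (1 - \<epsilon>)"
    hence "real k < x / 4" unfolding x_def by simp
    hence "int k \<le> \<lfloor>x / 4\<rfloor>" by (simp add: le_floor_iff)
    hence "k \<le> D" unfolding D_def by linarith
    hence "k + 2 \<le> d" unfolding d_def by simp
    thus "\<not> broadcast_solvable {0..<n} (Eg d n) k" using game dn k by blast
  qed
qed
end
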